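(* If $(U,\le)$ is an $\mathrm{OST}$-monoid, then addition in the semiring $U$ is compatible with the ordering: for all $x,y,z\in U$, $x\le y$ implies $x+z\le y+z$.
   Context: A supertropical monoid is a commutative monoid $(U,\cdot)$ with absorbing element $0$ and distinguished idempotent $e$ with $ex=0\Rightarrow x=0$, together with a total ordering $\le_M$ on $M:=eU$, compatible with multiplication and with $0$ least, making $M$ a bipotent semiring. The addition on $U$ is $x+y:=y$ if $ex<ey$, $x$ if $ex>ey$, $ex$ if $ex=ey$ (for OST-monoids this makes $U$ a semiring). An OST-monoid is a supertropical monoid $U$ with a total ordering $\le$ on $U$ such that: (OST1) $x\le y\Rightarrow xz\le yz$; (OST2) for $x,y\in M$, $x\le y\Leftrightarrow x\le_M y$; (OST3) $0\le1\le e$. *)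

theory Defs
  imports Main
begin

text \<open>A supertropical monoid on the whole type 'a: multiplication mul, unit one,
absorbing zero, distinguished idempotent e, and a total order leM on M = eU.\<close>

definition ghost_set :: "('a \<Rightarrow> 'a \<Rightarrow> 'a) \<Rightarrow> 'a \<Rightarrow> 'a set" where
  "ghost_set mul e = range (mul e)"

definition supertropical_monoid ::
  "('a \<Rightarrow> 'a \<Rightarrow> 'a) \<Rightarrow> 'a \<Rightarrow> 'a \<Rightarrow> 'a \<Rightarrow> ('a \<Rightarrow> 'a \<Rightarrow> bool) \<Rightarrow> bool" where
  "supertropical_monoid mul one zero e leM \<longleftrightarrow>
     (\<forall>x y z. mul (mul x y) z = mul x (mul y z)) \<and>
     (\<forall>x y. mul x y = mul y x) \<and>
     (\<forall>x. mul one x = x) \<and>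
     (\<forall>x. mul zero x = zero) \<and>
     mul e e = e \<and>
     (\<forall>x. mul e x = zero \<longrightarrow> x = zero) \<and>
     (\<forall>x\<in>ghost_set mul e. leM x x) \<and>
     (\<forall>x\<in>ghost_set mul e. \<forall>y\<in>ghost_set mul e. leM x y \<and> leM y x \<longrightarrow> x = y) \<and>
     (\<forall>x\<in>ghost_set mul e. \<forall>y\<in>ghost_set mul e. \<forall>z\<in>ghost_set mul e.
        leM x y \<and> leM y z \<longrightarrow> leM x z) \<and>
     (\<forall>x\<in>ghost_set mul e. \<forall>y\<in>ghost_set mul e. leM x y \<or> leM y x) \<and>
     (\<forall>x\<in>ghost_set mul e. \<forall>y\<in>ghost_set mul e. \<forall>z\<in>ghost_set mul e.
        leM x y \<longrightarrow> leM (mul x z) (mul y z)) \<and>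
     (\<forall>x\<in>ghost_set mul e. leM zero x)"

definition st_add ::
  "('a \<Rightarrow> 'a \<Rightarrow> 'a) \<Rightarrow> 'a \<Rightarrow> ('a \<Rightarrow> 'a \<Rightarrow> bool) \<Rightarrow> 'a \<Rightarrow> 'a \<Rightarrow> 'a" where
  "st_add mul e leM x y =
     (if mul e x = mul e y then mul e x
      else if leM (mul e x) (mul e y) then y
      else x)"

definition OST_monoid ::
  "('a \<Rightarrow> 'a \<Rightarrow> 'a) \<Rightarrow> 'a \<Rightarrow> 'a \<Rightarrow> 'a \<Rightarrow> ('a \<Rightarrow> 'a \<Rightarrow> bool) \<Rightarrow> ('a \<Rightarrow> 'a \<Rightarrow> bool) \<Rightarrow> bool" where
  "OST_monoid mul one zero e leM le \<longleftrightarrow>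
     supertropical_monoid mul one zero e leM \<and>
     (\<forall>x. le x x) \<and>
     (\<forall>x y. le x y \<and> le y x \<longrightarrow> x = y) \<and>
     (\<forall>x y z. le x y \<and> le y z \<longrightarrow> le x z) \<and>
     (\<forall>x y. le x y \<or> le y x) \<and>
     (\<forall>x y z. le x y \<longrightarrow> le (mul x z) (mul y z)) \<and>
     (\<forall>x\<in>ghost_set mul e. \<forall>y\<in>ghost_set mul e. le x y \<longleftrightarrow> leM x y) \<and>
     le zero one \<and> le one e"

end

theory Submission
  imports Defs
begin

theorem theorem61p5:
  fixes mul :: "'a \<Rightarrow> 'a \<Rightarrow> 'a" and one zero e :: 'a
    and leM le :: "'a \<Rightarrow> 'a \<Rightarrow> bool"
  assumes "OST_monoid mul one zero e leM le"
  shows "\<forall>x y z. le x y \<longrightarrow> le (st_add mul e leM x z) (st_add mul e leM y z)"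
proof (intro allI impI)
  fix x y z assume xy: "le x y"
  have O: "supertropical_monoid mul one zero e leM" "\<forall>x. le x x"
     "\<forall>x y. le x y \<and> le y x \<longrightarrow> x = y"
     "\<forall>x y z. le x y \<and> le y z \<longrightarrow> le x z"
     "\<forall>x y. le x y \<or> le y x"
     "\<forall>x y z. le x y \<longrightarrow> le (mul x z) (mul y z)"
     "\<forall>x\<in>ghost_set mul e. \<forall>y\<in>ghost_set mul e. le x y \<longleftrightarrow> leM x y"
     "le zero one" "le one e"
    using assms unfolding OST_monoid_def by blast+
  have S: "\<forall>x y z. mul (mul x y) z = mul x (mul y z)"
     "\<forall>x y. mul x y = mul y x" "\<forall>x. mul one x = x" "mul e e = e"
    using O(1) unfolding supertropical_monoid_def by blast+
  have refl: "\<And>u. le u u" using O(2) by blast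
  have antis: "\<And>u v. le u v \<Longrightarrow> le v u \<Longrightarrow> u = v" using O(3) by blast
  have trans: "\<And>u v w. le u v \<Longrightarrow> le v w \<Longrightarrow> le u w" using O(4) by blast
  have tot: "\<And>u v. le u v \<or> le v u" using O(5) by blast
  have mono: "\<And>u v w. le u v \<Longrightarrow> le (mul u w) (mul v w)" using O(6) by blast
  have comm: "\<And>u v. mul u v = mul v u" using S(2) by blast
  have assoc: "\<And>u v w. mul (mul u v) w = mul u (mul v w)" using S(1) by blast
  have one: "\<And>u. mul one u = u" using S(3) by blast
  have ee: "mul e e = e" using S(4) .
  have le1e: "le one e" using O(9) .
  have ost2: "\<And>u v. u \<in> ghost_set mul e \<Longrightarrow> v \<in> ghost_set mul e \<Longrightarrow> le u v = leM u v"
    using O(7) by blast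
  have gh: "\<And>u. mul e u \<in> ghost_set mul e" by (simp add: ghost_set_def)
  have emono: "\<And>u v. le u v \<Longrightarrow> le (mul e u) (mul e v)"
    using mono comm by metis
  have upe: "\<And>u. le u (mul e u)" using mono[OF le1e] one comm by metis
  have eeu: "\<And>u. mul e (mul e u) = mul e u" using assoc ee by metis
  have key: "\<And>u v. le (mul e u) (mul e v) \<Longrightarrow> mul e u \<noteq> mul e v \<Longrightarrow> le v u \<Longrightarrow> False"
    using emono antis by metis
  have sa: "\<And>u w. st_add mul e leM u w = (if mul e u = mul e w then mul e u
      else if le (mul e u) (mul e w) then w else u)"
    unfolding st_add_def using ost2 gh by simp
  have exy: "le (mul e x) (mul e y)" using emono xy .
  define a where "a = mul e x"
  define b where "b = mul e y"
  define c where "c = mul e z"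
  have ab: "le a b" using exy a_def b_def by simp
  have lt: "\<And>u v. le (mul e u) (mul e v) \<Longrightarrow> mul e u \<noteq> mul e v \<Longrightarrow> le u v"
    using key tot by blast
  have G: "le (if a = c then a else if le a c then z else x) (if b = c then b else if le b c then z else y)"
  proof (cases "a = c")
    case True
    then show ?thesis
    proof (cases "b = c")
      case True then show ?thesis using \<open>a = c\<close> refl by simp
    next
      case False
      have "le c b" using ab True by simp
      hence "le c y" using lt[of c y] eeu c_def b_def False by metis
      moreover have "\<not> le b c" using \<open>le c b\<close> False antis by metis
      ultimately show ?thesis using True False by simp
    qed
  next
    case ac: False
    show ?thesis
    proof (cases "le a c")
      case True
      show ?thesis
      proof (cases "b = c")
        case True then show ?thesis using ac \<open>le a c\<close> upe c_def by simp
      next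
        case bc: False
        show ?thesis
        proof (cases "le b c")
          case True then show ?thesis using ac bc \<open>le a c\<close> refl by simp
        next
          case False
          hence "le c b" using tot by blast
          hence "le z y" using lt[of z y] c_def b_def bc by metis
          thus ?thesis using ac bc False \<open>le a c\<close> by simp
        qed
      qed
    next
      case False
      hence ca: "le c a" using tot by blast
      have bc: "b \<noteq> c" using ab ca antis ac by metis
      have "\<not> le b c" using ab ca antis ac trans by metis
      thus ?thesis using ac False bc xy by simp
    qed
  qed
  show "le (st_add mul e leM x z) (st_add mul e leM y z)"
    using G unfolding sa a_def b_def c_def .
qed

end
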